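(* Let $r,p,q\ge1$ and $n\ge0$, and suppose the variety $\mathcal V$ is $(3,2r)$-modular (i.e. has $2r+1$ Day terms) and has $n+2$ Gumm terms. Then $\mathcal V$ is $(z,w)$-modular, where $z=2^p2^q-1$ and $w=2r^q+(2^q2^{p+1}-2^{q+2}-2p+2)n$.
   Context: $\circ$ is relational composition, juxtaposition is intersection. For relations $X,Y$ and $m\ge1$, $X\circ_m Y$ denotes $X\circ Y\circ X\circ\cdots$ with $m$ factors. For $m\ge3$, a variety is $(m,k)$-modular if each of its algebras satisfies $\alpha(\beta\circ_m\alpha\gamma)\subseteq\alpha\beta\circ_k\alpha\gamma$ for all congruences $\alpha,\beta,\gamma$. A variety has $n+2$ Gumm terms if it has ternary terms $p,j_1,\dots,j_{n+1}$ satisfying: $x=j_i(x,y,x)$ for all $i$; $x=p(x,z,z)$; $p(x,x,z)=j_1(x,x,z)$; $j_i(x,z,z)=j_{i+1}(x,z,z)$ for odd $i\le n$; $j_i(x,x,z)=j_{i+1}(x,x,z)$ for even $i\le n$; $j_{n+1}(x,y,z)=z$. *)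

theory Defs
  imports Main
begin

datatype ('f, 'v) trm = Var 'v | Fn 'f "('f, 'v) trm list"

fun wf_trm :: "('f \<Rightarrow> nat) \<Rightarrow> ('f, 'v) trm \<Rightarrow> bool" where
  "wf_trm ar (Var v) = True"
| "wf_trm ar (Fn f ts) = (length ts = ar f \<and> (\<forall>t\<in>set ts. wf_trm ar t))"

fun vars_trm :: "('f, 'v) trm \<Rightarrow> 'v set" where
  "vars_trm (Var v) = {v}"
| "vars_trm (Fn f ts) = (\<Union>t\<in>set ts. vars_trm t)"

fun subst :: "('v \<Rightarrow> ('f, 'w) trm) \<Rightarrow> ('f, 'v) trm \<Rightarrow> ('f, 'w) trm" where
  "subst \<sigma> (Var v) = \<sigma> v"
| "subst \<sigma> (Fn f ts) = Fn f (map (subst \<sigma>) ts)"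

record ('f, 'a) alg =
  carrier :: "'a set"
  ops :: "'f \<Rightarrow> 'a list \<Rightarrow> 'a"

definition is_alg :: "('f \<Rightarrow> nat) \<Rightarrow> ('f, 'a) alg \<Rightarrow> bool" where
  "is_alg ar A \<longleftrightarrow> carrier A \<noteq> {} \<and>
     (\<forall>f xs. length xs = ar f \<and> set xs \<subseteq> carrier A \<longrightarrow> ops A f xs \<in> carrier A)"

fun eval :: "('f, 'a) alg \<Rightarrow> ('v \<Rightarrow> 'a) \<Rightarrow> ('f, 'v) trm \<Rightarrow> 'a" where
  "eval A \<rho> (Var v) = \<rho> v"
| "eval A \<rho> (Fn f ts) = ops A f (map (eval A \<rho>) ts)"

definition satisfies :: "('f, 'a) alg \<Rightarrow> ('f, nat) trm \<Rightarrow> ('f, nat) trm \<Rightarrow> bool" where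
  "satisfies A s t \<longleftrightarrow> (\<forall>\<rho>. (\<forall>v. \<rho> v \<in> carrier A) \<longrightarrow> eval A \<rho> s = eval A \<rho> t)"

definition models :: "('f \<Rightarrow> nat) \<Rightarrow> (('f, nat) trm \<times> ('f, nat) trm) set \<Rightarrow> ('f, 'a) alg \<Rightarrow> bool" where
  "models ar \<Sigma> A \<longleftrightarrow> is_alg ar A \<and> (\<forall>(s, t)\<in>\<Sigma>. satisfies A s t)"

definition congruence :: "('f \<Rightarrow> nat) \<Rightarrow> ('f, 'a) alg \<Rightarrow> 'a rel \<Rightarrow> bool" where
  "congruence ar A \<alpha> \<longleftrightarrow> equiv (carrier A) \<alpha> \<and>
     (\<forall>f xs ys. length xs = ar f \<and> length ys = ar f \<and> set xs \<subseteq> carrier A \<and> set ys \<subseteq> carrier A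
        \<and> list_all2 (\<lambda>x y. (x, y) \<in> \<alpha>) xs ys \<longrightarrow> (ops A f xs, ops A f ys) \<in> \<alpha>)"

fun comp_alt :: "'a rel \<Rightarrow> 'a rel \<Rightarrow> nat \<Rightarrow> 'a rel" where
  "comp_alt X Y 0 = Id"
| "comp_alt X Y (Suc m) = X O comp_alt Y X m"

definition alg_mk_modular :: "('f \<Rightarrow> nat) \<Rightarrow> nat \<Rightarrow> nat \<Rightarrow> ('f, 'a) alg \<Rightarrow> bool" where
  "alg_mk_modular ar m k A \<longleftrightarrow>
     (\<forall>\<alpha> \<beta> \<gamma>. congruence ar A \<alpha> \<and> congruence ar A \<beta> \<and> congruence ar A \<gamma> \<longrightarrow>
        \<alpha> \<inter> comp_alt \<beta> (\<alpha> \<inter> \<gamma>) m \<subseteq> comp_alt (\<alpha> \<inter> \<beta>) (\<alpha> \<inter> \<gamma>) k)"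

text \<open>(m,k)-modularity of the variety, for its algebras whose carrier lives in type 'b.\<close>
definition variety_mk_modular ::
  "'b itself \<Rightarrow> ('f \<Rightarrow> nat) \<Rightarrow> (('f, nat) trm \<times> ('f, nat) trm) set \<Rightarrow> nat \<Rightarrow> nat \<Rightarrow> bool" where
  "variety_mk_modular (_ :: 'b itself) ar \<Sigma> m k \<longleftrightarrow>
     (\<forall>A :: ('f, 'b) alg. models ar \<Sigma> A \<longrightarrow> alg_mk_modular ar m k A)"

text \<open>An identity holds in the variety (checked on its algebras with carrier in type 'b).\<close>
definition holds_in ::
  "'b itself \<Rightarrow> ('f \<Rightarrow> nat) \<Rightarrow> (('f, nat) trm \<times> ('f, nat) trm) set \<Rightarrow> ('f, nat) trm \<Rightarrow> ('f, nat) trm \<Rightarrow> bool" where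
  "holds_in (_ :: 'b itself) ar \<Sigma> s t \<longleftrightarrow> (\<forall>A :: ('f, 'b) alg. models ar \<Sigma> A \<longrightarrow> satisfies A s t)"

text \<open>t(a,b,c) for a ternary term t in the variables x = Var 0, y = Var 1, z = Var 2.\<close>
definition tern :: "('f, nat) trm \<Rightarrow> ('f, nat) trm \<Rightarrow> ('f, nat) trm \<Rightarrow> ('f, nat) trm \<Rightarrow> ('f, nat) trm" where
  "tern t a b c = subst (\<lambda>v. if v = 0 then a else if v = 1 then b else c) t"

definition ternary_term :: "('f \<Rightarrow> nat) \<Rightarrow> ('f, nat) trm \<Rightarrow> bool" where
  "ternary_term ar t \<longleftrightarrow> wf_trm ar t \<and> vars_trm t \<subseteq> {0, 1, 2}"

definition has_gumm_terms ::
  "'b itself \<Rightarrow> ('f \<Rightarrow> nat) \<Rightarrow> (('f, nat) trm \<times> ('f, nat) trm) set \<Rightarrow> nat \<Rightarrow> bool" where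
  "has_gumm_terms B ar \<Sigma> n \<longleftrightarrow>
     (\<exists>p j. ternary_term ar p \<and> (\<forall>i\<in>{1..n+1}. ternary_term ar (j i)) \<and>
       (let x = Var 0; y = Var 1; z = Var 2; hold = holds_in B ar \<Sigma> in
         (\<forall>i\<in>{1..n+1}. hold x (tern (j i) x y x)) \<and>
         hold x (tern p x z z) \<and>
         hold (tern p x x z) (tern (j 1) x x z) \<and>
         (\<forall>i. 1 \<le> i \<and> i \<le> n \<and> odd i \<longrightarrow> hold (tern (j i) x z z) (tern (j (i+1)) x z z)) \<and>
         (\<forall>i. 1 \<le> i \<and> i \<le> n \<and> even i \<longrightarrow> hold (tern (j i) x x z) (tern (j (i+1)) x x z)) \<and>
         hold (tern (j (n+1)) x y z) z))"

end

theory Submission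
  imports Defs
begin


lemma comp_alt_chain:
  "(a,b) \<in> comp_alt X Y k \<longleftrightarrow>
   (\<exists>f. f 0 = a \<and> f k = b \<and> (\<forall>i<k. (f i, f (Suc i)) \<in> (if even i then X else Y)))"
proof (induction k arbitrary: X Y a)
  case 0
  then show ?case by auto
next
  case (Suc k)
  show ?case
  proof
    assume "(a,b) \<in> comp_alt X Y (Suc k)"
    then obtain c where ac: "(a,c) \<in> X" and cb: "(c,b) \<in> comp_alt Y X k" by auto
    from cb Suc.IH obtain g where g: "g 0 = c" "g k = b"
      "\<forall>i<k. (g i, g (Suc i)) \<in> (if even i then Y else X)" by blast
    let ?f = "\<lambda>i. if i = 0 then a else g (i - 1)"
    have "\<forall>i<Suc k. (?f i, ?f (Suc i)) \<in> (if even i then X else Y)"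
    proof (intro allI impI)
      fix i assume i: "i < Suc k"
      show "(?f i, ?f (Suc i)) \<in> (if even i then X else Y)"
      proof (cases i)
        case 0 then show ?thesis using ac g by simp
      next
        case (Suc j) then show ?thesis using g(3) i by auto
      qed
    qed
    then show "\<exists>f. f 0 = a \<and> f (Suc k) = b \<and> (\<forall>i<Suc k. (f i, f (Suc i)) \<in> (if even i then X else Y))"
      using g by (intro exI[of _ ?f]) auto
  next
    assume "\<exists>f. f 0 = a \<and> f (Suc k) = b \<and> (\<forall>i<Suc k. (f i, f (Suc i)) \<in> (if even i then X else Y))"
    then obtain f where f: "f 0 = a" "f (Suc k) = b"
      "\<forall>i<Suc k. (f i, f (Suc i)) \<in> (if even i then X else Y)" by blast
    have "(a, f 1) \<in> X" using f by (metis One_nat_def even_zero zero_less_Suc)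
    moreover have "(f 1, b) \<in> comp_alt Y X k"
      unfolding Suc.IH
      by (rule exI[of _ "\<lambda>i. f (Suc i)"]) (use f in auto)
    ultimately show "(a,b) \<in> comp_alt X Y (Suc k)" by auto
  qed
qed

lemma comp_alt_add:
  "comp_alt X Y (a + b) = comp_alt X Y a O (if even a then comp_alt X Y b else comp_alt Y X b)"
proof (induction a arbitrary: X Y)
  case 0 then show ?case by simp
next
  case (Suc a) then show ?case by (simp add: O_assoc)
qed

lemma comp_alt_add_even:
  "even a \<Longrightarrow> comp_alt X Y (a + b) = comp_alt X Y a O comp_alt X Y b"
  by (simp add: comp_alt_add)

lemma comp_alt_one: "comp_alt X Y 1 = X" by simp

lemma comp_alt_end_even:
  assumes "even w" "w \<ge> 2" "trans Y"
  shows "comp_alt X Y w O Y \<subseteq> comp_alt X Y w"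
proof -
  obtain v where v: "w = v + 1" "odd v"
    using assms by (intro that[of "w - 1"]) auto
  have "comp_alt X Y w = comp_alt X Y v O Y" using v comp_alt_add[of X Y v 1] by simp
  moreover have "Y O Y \<subseteq> Y" using assms(3) by (auto dest: transD)
  ultimately show ?thesis by (auto simp: O_assoc)
qed

lemma comp_alt_merge_odd:
  assumes "trans X"
  shows "comp_alt X Y (2*m+1) O comp_alt X Y (2*m'+1) \<subseteq> comp_alt X Y (2*m+2*m'+1)"
proof -
  have e1: "comp_alt X Y (2*m+1) = comp_alt X Y (2*m) O X" using comp_alt_add[of X Y "2*m" 1] by simp
  have e2: "comp_alt X Y (2*m'+1) = X O comp_alt Y X (2*m')" by simp
  have e3: "comp_alt X Y (2*m+2*m'+1) = comp_alt X Y (2*m) O (X O comp_alt Y X (2*m'))"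
    using comp_alt_add_even[of "2*m" X Y "2*m'+1"] e2 by (simp add: add.assoc)
  have "X O X \<subseteq> X" using assms by (auto dest: transD)
  then have "comp_alt X Y (2*m) O X O (X O comp_alt Y X (2*m')) \<subseteq> comp_alt X Y (2*m) O (X O comp_alt Y X (2*m'))"
    by blast
  then show ?thesis unfolding e1 e2 e3 by (simp add: O_assoc)
qed

lemma comp_alt_converse:
  assumes "sym X" "sym Y"
  shows "(comp_alt X Y k)\<inverse> = (if even k then comp_alt Y X k else comp_alt X Y k)"
proof -
  have rev: "(b,a) \<in> (if even k then comp_alt Y X k else comp_alt X Y k)"
    if "(a,b) \<in> comp_alt X Y k" "sym X" "sym Y" for a b X Y
  proof -
    from that obtain f where f: "f 0 = a" "f k = b"
      "\<forall>i<k. (f i, f (Suc i)) \<in> (if even i then X else Y)" unfolding comp_alt_chain by blast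
    let ?g = "\<lambda>i. f (k - i)"
    have st: "(?g i, ?g (Suc i)) \<in> (if even i then (if even k then Y else X) else (if even k then X else Y))"
      if i: "i < k" for i
    proof -
      have "(f (k - Suc i), f (Suc (k - Suc i))) \<in> (if even (k - Suc i) then X else Y)"
        using f(3)[rule_format, of "k - Suc i"] i by simp
      moreover have "Suc (k - Suc i) = k - i" using i by simp
      ultimately have "(f (k - i), f (k - Suc i)) \<in> (if even (k - Suc i) then X else Y)"
        using \<open>sym X\<close> \<open>sym Y\<close> by (auto dest: symD)
      moreover have "even (k - Suc i) \<longleftrightarrow> (even i \<longleftrightarrow> odd k)" using i by auto
      ultimately show ?thesis by (auto split: if_splits)
    qed
    show ?thesis
    proof (cases "even k")
      case True
      have "\<exists>g. g 0 = b \<and> g k = a \<and> (\<forall>i<k. (g i, g (Suc i)) \<in> (if even i then Y else X))"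
        apply (rule exI[of _ ?g]) using f True by (auto dest: st)
      then show ?thesis using True by (simp add: comp_alt_chain)
    next
      case False
      have "\<exists>g. g 0 = b \<and> g k = a \<and> (\<forall>i<k. (g i, g (Suc i)) \<in> (if even i then X else Y))"
        apply (rule exI[of _ ?g]) using f False by (auto dest: st)
      then show ?thesis using False by (simp add: comp_alt_chain)
    qed
  qed
  show ?thesis
  proof (cases "even k")
    case True
    show ?thesis using rev[of _ _ X Y] rev[of _ _ Y X] True assms by fastforce
  next
    case False
    show ?thesis using rev[of _ _ X Y] False assms by fastforce
  qed
qed



definition wfs :: "('f \<Rightarrow> nat) \<Rightarrow> ('v \<Rightarrow> ('f, 'w) trm) \<Rightarrow> bool" where
  "wfs ar \<sigma> \<longleftrightarrow> (\<forall>v. wf_trm ar (\<sigma> v))"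

lemma wf_subst: "wf_trm ar t \<Longrightarrow> wfs ar \<sigma> \<Longrightarrow> wf_trm ar (subst \<sigma> t)"
  by (induction t) (auto simp: wfs_def)

lemma subst_subst: "subst \<sigma> (subst \<tau> t) = subst (\<lambda>v. subst \<sigma> (\<tau> v)) t"
  by (induction t) auto

lemma subst_Var: "subst Var t = t"
  by (induction t) (auto simp: map_idI)

lemma eval_subst: "eval A \<rho> (subst \<sigma> t) = eval A (\<lambda>v. eval A \<rho> (\<sigma> v)) t"
  by (induction t) (simp_all add: comp_def cong: map_cong)

lemma eval_closed:
  "is_alg ar A \<Longrightarrow> (\<forall>v. \<rho> v \<in> carrier A) \<Longrightarrow> wf_trm ar t \<Longrightarrow> eval A \<rho> t \<in> carrier A"
proof (induction t)
  case (Var x) then show ?case by simp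
next
  case (Fn f ts)
  have "set (map (eval A \<rho>) ts) \<subseteq> carrier A" using Fn by auto
  then show ?case using Fn(2,4) unfolding is_alg_def by simp
qed

lemma eval_cong: "(\<forall>v\<in>vars_trm t. \<rho> v = \<rho>' v) \<Longrightarrow> eval A \<rho> t = eval A \<rho>' t"
  by (induction t) (simp_all cong: map_cong)

lemma list_all2_mapI: "(\<And>x. x \<in> set xs \<Longrightarrow> P (f x) (g x)) \<Longrightarrow> list_all2 P (map f xs) (map g xs)"
  by (induction xs) auto

lemma eval_congr:
  assumes "congruence ar A \<theta>" "is_alg ar A" "\<forall>v. \<rho> v \<in> carrier A" "\<forall>v. \<rho>' v \<in> carrier A"
    "\<forall>v. (\<rho> v, \<rho>' v) \<in> \<theta>"
  shows "wf_trm ar t \<Longrightarrow> (eval A \<rho> t, eval A \<rho>' t) \<in> \<theta>"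
proof (induction t)
  case (Var x) then show ?case using assms by simp
next
  case (Fn f ts)
  have l: "length (map (eval A \<rho>) ts) = ar f" "length (map (eval A \<rho>') ts) = ar f" using Fn by auto
  have s: "set (map (eval A \<rho>) ts) \<subseteq> carrier A" "set (map (eval A \<rho>') ts) \<subseteq> carrier A"
    using Fn eval_closed[OF assms(2) assms(3)] eval_closed[OF assms(2) assms(4)] by auto
  have r: "list_all2 (\<lambda>x y. (x, y) \<in> \<theta>) (map (eval A \<rho>) ts) (map (eval A \<rho>') ts)"
    by (rule list_all2_mapI) (use Fn in auto)
  show ?case using assms(1) l s r unfolding congruence_def by simp
qed

inductive eqc :: "('f \<Rightarrow> nat) \<Rightarrow> (('f, nat) trm \<times> ('f, nat) trm) set \<Rightarrow> ('f, nat) trm \<Rightarrow> ('f, nat) trm \<Rightarrow> bool"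
  for ar \<Sigma> where
  ax: "(s, t) \<in> \<Sigma> \<Longrightarrow> wfs ar \<sigma> \<Longrightarrow> eqc ar \<Sigma> (subst \<sigma> s) (subst \<sigma> t)"
| rfl: "wf_trm ar t \<Longrightarrow> eqc ar \<Sigma> t t"
| sy: "eqc ar \<Sigma> s t \<Longrightarrow> eqc ar \<Sigma> t s"
| tr: "eqc ar \<Sigma> s t \<Longrightarrow> eqc ar \<Sigma> t u \<Longrightarrow> eqc ar \<Sigma> s u"
| cg: "length ss = ar f \<Longrightarrow> list_all2 (eqc ar \<Sigma>) ss ts \<Longrightarrow> eqc ar \<Sigma> (Fn f ss) (Fn f ts)"

definition SWF :: "('f \<Rightarrow> nat) \<Rightarrow> (('f, nat) trm \<times> ('f, nat) trm) set \<Rightarrow> bool" where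
  "SWF ar \<Sigma> \<longleftrightarrow> (\<forall>(s, t)\<in>\<Sigma>. wf_trm ar s \<and> wf_trm ar t)"

lemma eqc_wf: "eqc ar \<Sigma> s t \<Longrightarrow> SWF ar \<Sigma> \<Longrightarrow> wf_trm ar s \<and> wf_trm ar t"
proof (induction rule: eqc.induct)
  case (ax s t \<sigma>) then show ?case using wf_subst unfolding SWF_def by fastforce
next
  case (cg ss f ts)
  have "length ts = length ss" using cg(2) by (simp add: list_all2_lengthD)
  moreover have "\<forall>x\<in>set ss. wf_trm ar x" "\<forall>x\<in>set ts. wf_trm ar x"
    using cg(2,3) by (auto simp: list_all2_conv_all_nth in_set_conv_nth)
  ultimately show ?case using cg(1) by simp
qed auto

lemma list_all2_map_eq: "list_all2 (\<lambda>x y. f x = g y) xs ys \<Longrightarrow> map f xs = map g ys"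
  by (induction rule: list_all2_induct) auto

lemma eqc_sound:
  assumes "models ar \<Sigma> A" "SWF ar \<Sigma>"
  shows "eqc ar \<Sigma> s t \<Longrightarrow> (\<forall>v. \<rho> v \<in> carrier A) \<Longrightarrow> eval A \<rho> s = eval A \<rho> t"
proof (induction arbitrary: \<rho> rule: eqc.induct)
  case (ax s t \<sigma>)
  have alg: "is_alg ar A" using assms unfolding models_def by simp
  have "\<forall>v. eval A \<rho> (\<sigma> v) \<in> carrier A"
    using eval_closed[OF alg ax(3)] ax(2) unfolding wfs_def by auto
  moreover have "satisfies A s t" using assms ax(1) unfolding models_def by auto
  ultimately show ?case unfolding satisfies_def eval_subst by auto
next
  case (cg ss f ts)
  have "map (eval A \<rho>) ss = map (eval A \<rho>) ts"
    by (rule list_all2_map_eq) (use cg(2,3) in \<open>auto elim: list_all2_mono\<close>)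
  then show ?case by simp
qed auto

lemma eqc_subst:
  "eqc ar \<Sigma> s t \<Longrightarrow> wfs ar \<sigma> \<Longrightarrow> eqc ar \<Sigma> (subst \<sigma> s) (subst \<sigma> t)"
proof (induction rule: eqc.induct)
  case (ax s t \<tau>)
  have "wfs ar (\<lambda>v. subst \<sigma> (\<tau> v))" using ax wf_subst unfolding wfs_def by blast
  then show ?case using eqc.ax[OF ax(1)] by (simp add: subst_subst)
next
  case (rfl t) then show ?case by (simp add: eqc.rfl wf_subst)
next
  case (sy s t) then show ?case by (simp add: eqc.sy)
next
  case (tr s t u) then show ?case by (meson eqc.tr)
next
  case (cg ss f ts)
  have "list_all2 (eqc ar \<Sigma>) (map (subst \<sigma>) ss) (map (subst \<sigma>) ts)"
    using cg(2,3) by (auto simp: list_all2_map1 list_all2_map2 elim: list_all2_mono)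
  then show ?case using cg(1) by (auto intro: eqc.cg)
qed

lemma eqc_subst2:
  "wf_trm ar t \<Longrightarrow> (\<forall>v. eqc ar \<Sigma> (\<sigma> v) (\<tau> v)) \<Longrightarrow> eqc ar \<Sigma> (subst \<sigma> t) (subst \<tau> t)"
proof (induction t)
  case (Var x) then show ?case by simp
next
  case (Fn f ts)
  have "list_all2 (eqc ar \<Sigma>) (map (subst \<sigma>) ts) (map (subst \<tau>) ts)"
    by (rule list_all2_mapI) (use Fn in auto)
  then show ?case using Fn(2) by (auto intro: eqc.cg)
qed

definition rep :: "('f \<Rightarrow> nat) \<Rightarrow> (('f, nat) trm \<times> ('f, nat) trm) set \<Rightarrow> ('f, nat) trm \<Rightarrow> ('f, nat) trm" where
  "rep ar \<Sigma> t = (SOME u. eqc ar \<Sigma> u t)"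

lemma rep_eqc: "wf_trm ar t \<Longrightarrow> eqc ar \<Sigma> (rep ar \<Sigma> t) t"
  unfolding rep_def by (rule someI[of _ t]) (rule eqc.rfl)

lemma rep_eq: "eqc ar \<Sigma> s t \<Longrightarrow> rep ar \<Sigma> s = rep ar \<Sigma> t"
proof -
  assume st: "eqc ar \<Sigma> s t"
  have "(\<lambda>u. eqc ar \<Sigma> u s) = (\<lambda>u. eqc ar \<Sigma> u t)"
    using st by (auto intro: eqc.tr eqc.sy)
  then show ?thesis unfolding rep_def by simp
qed

lemma rep_eq_iff: "SWF ar \<Sigma> \<Longrightarrow> wf_trm ar s \<Longrightarrow> wf_trm ar t \<Longrightarrow> rep ar \<Sigma> s = rep ar \<Sigma> t \<longleftrightarrow> eqc ar \<Sigma> s t"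
  by (metis eqc.sy eqc.tr rep_eq rep_eqc)

definition FA :: "('f \<Rightarrow> nat) \<Rightarrow> (('f, nat) trm \<times> ('f, nat) trm) set \<Rightarrow> ('f, ('f, nat) trm) alg" where
  "FA ar \<Sigma> = \<lparr>carrier = rep ar \<Sigma> ` {t. wf_trm ar t}, ops = (\<lambda>f xs. rep ar \<Sigma> (Fn f xs))\<rparr>"

lemma FA_carrier_wf: "SWF ar \<Sigma> \<Longrightarrow> x \<in> carrier (FA ar \<Sigma>) \<Longrightarrow> wf_trm ar x"
  unfolding FA_def using rep_eqc eqc_wf by fastforce

lemma FA_carrier_rep: "SWF ar \<Sigma> \<Longrightarrow> x \<in> carrier (FA ar \<Sigma>) \<Longrightarrow> rep ar \<Sigma> x = x"
  unfolding FA_def using rep_eqc rep_eq by fastforce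

lemma FA_alg: "SWF ar \<Sigma> \<Longrightarrow> is_alg ar (FA ar \<Sigma>)"
  unfolding is_alg_def
proof (intro conjI allI impI)
  show "carrier (FA ar \<Sigma>) \<noteq> {}" unfolding FA_def
    by (metis (mono_tags) empty_iff image_eqI mem_Collect_eq wf_trm.simps(1) alg.select_convs(1))
next
  fix f xs assume "SWF ar \<Sigma>" "length xs = ar f \<and> set xs \<subseteq> carrier (FA ar \<Sigma>)"
  then have "wf_trm ar (Fn f xs)" using FA_carrier_wf by auto
  then show "ops (FA ar \<Sigma>) f xs \<in> carrier (FA ar \<Sigma>)" unfolding FA_def by auto
qed

lemma eval_FA:
  assumes "SWF ar \<Sigma>" "\<forall>v. \<rho> v \<in> carrier (FA ar \<Sigma>)"
  shows "wf_trm ar t \<Longrightarrow> eval (FA ar \<Sigma>) \<rho> t = rep ar \<Sigma> (subst \<rho> t)"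
proof (induction t)
  case (Var x) then show ?case using FA_carrier_rep[OF assms(1), of "\<rho> x"] assms(2) by simp
next
  case (Fn f ts)
  have w: "wfs ar \<rho>" using assms FA_carrier_wf unfolding wfs_def by blast
  have "list_all2 (eqc ar \<Sigma>) (map (\<lambda>t. rep ar \<Sigma> (subst \<rho> t)) ts) (map (subst \<rho>) ts)"
    by (rule list_all2_mapI) (use Fn w in \<open>auto intro: rep_eqc wf_subst\<close>)
  then have "eqc ar \<Sigma> (Fn f (map (\<lambda>t. rep ar \<Sigma> (subst \<rho> t)) ts)) (Fn f (map (subst \<rho>) ts))"
    using Fn(2) by (intro eqc.cg) auto
  then have "rep ar \<Sigma> (Fn f (map (\<lambda>t. rep ar \<Sigma> (subst \<rho> t)) ts)) = rep ar \<Sigma> (Fn f (map (subst \<rho>) ts))"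
    by (rule rep_eq)
  moreover have m: "map (eval (FA ar \<Sigma>) \<rho>) ts = map (\<lambda>t. rep ar \<Sigma> (subst \<rho> t)) ts"
    using Fn by auto
  moreover have "eval (FA ar \<Sigma>) \<rho> (Fn f ts) = rep ar \<Sigma> (Fn f (map (eval (FA ar \<Sigma>) \<rho>) ts))"
    by (simp add: FA_def)
  ultimately show ?case by (simp only: m subst.simps)
qed

lemma FA_models: "SWF ar \<Sigma> \<Longrightarrow> models ar \<Sigma> (FA ar \<Sigma>)"
  unfolding models_def
proof (intro conjI ballI)
  assume S: "SWF ar \<Sigma>"
  show "is_alg ar (FA ar \<Sigma>)" using FA_alg[OF S] .
  fix st assume st: "st \<in> \<Sigma>"
  obtain s t where [simp]: "st = (s, t)" by (cases st)
  have wst: "wf_trm ar s" "wf_trm ar t" using S st unfolding SWF_def by auto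
  have "satisfies (FA ar \<Sigma>) s t"
    unfolding satisfies_def
  proof (intro allI impI)
    fix \<rho> :: "nat \<Rightarrow> (_, nat) trm" assume r: "\<forall>v. \<rho> v \<in> carrier (FA ar \<Sigma>)"
    then have "wfs ar \<rho>" using S FA_carrier_wf unfolding wfs_def by blast
    then have "eqc ar \<Sigma> (subst \<rho> s) (subst \<rho> t)" using st by (intro eqc.ax) auto
    then show "eval (FA ar \<Sigma>) \<rho> s = eval (FA ar \<Sigma>) \<rho> t"
      using eval_FA[OF S r] wst rep_eq by metis
  qed
  then show "case st of (s, t) \<Rightarrow> satisfies (FA ar \<Sigma>) s t" by simp
qed

lemma var_in_FA: "rep ar \<Sigma> (Var v) \<in> carrier (FA ar \<Sigma>)"
  unfolding FA_def by auto

lemma FA_complete: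
  assumes "SWF ar \<Sigma>" "satisfies (FA ar \<Sigma>) s t" "wf_trm ar s" "wf_trm ar t"
  shows "eqc ar \<Sigma> s t"
proof -
  let ?\<rho> = "\<lambda>v. rep ar \<Sigma> (Var v)"
  have r: "\<forall>v. ?\<rho> v \<in> carrier (FA ar \<Sigma>)" using var_in_FA by blast
  have "eval (FA ar \<Sigma>) ?\<rho> s = eval (FA ar \<Sigma>) ?\<rho> t" using assms(2) r by (simp add: satisfies_def)
  then have e: "rep ar \<Sigma> (subst ?\<rho> s) = rep ar \<Sigma> (subst ?\<rho> t)" using eval_FA[OF assms(1) r] assms by simp
  have v: "\<forall>v. eqc ar \<Sigma> (?\<rho> v) (Var v)" by (auto intro: rep_eqc)
  have "eqc ar \<Sigma> (subst ?\<rho> s) s" using eqc_subst2[OF assms(3) v] subst_Var by metis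
  moreover have "eqc ar \<Sigma> (subst ?\<rho> t) t" using eqc_subst2[OF assms(4) v] subst_Var by metis
  moreover have "eqc ar \<Sigma> (subst ?\<rho> s) (subst ?\<rho> t)"
    using e rep_eq_iff[OF assms(1)] calculation eqc_wf[OF _ assms(1)] by metis
  ultimately show ?thesis by (meson eqc.sy eqc.tr)
qed

lemma holds_transfer:
  assumes "SWF ar \<Sigma>" "holds_in TYPE(('f, nat) trm) ar \<Sigma> s t" "wf_trm ar s" "wf_trm ar t"
    "models ar \<Sigma> (A :: ('f, 'a) alg)"
  shows "satisfies A s t"
proof -
  have "satisfies (FA ar \<Sigma>) s t" using assms(2) FA_models[OF assms(1)] unfolding holds_in_def by blast
  then have "eqc ar \<Sigma> s t" using FA_complete assms by blast
  then show ?thesis unfolding satisfies_def using eqc_sound[OF assms(5,1)] by blast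
qed

definition K :: "('f \<Rightarrow> nat) \<Rightarrow> (('f, nat) trm \<times> ('f, nat) trm) set \<Rightarrow> (nat \<Rightarrow> ('f, nat) trm) \<Rightarrow> ('f, nat) trm rel" where
  "K ar \<Sigma> \<sigma> = {(u, v). u \<in> carrier (FA ar \<Sigma>) \<and> v \<in> carrier (FA ar \<Sigma>) \<and> eqc ar \<Sigma> (subst \<sigma> u) (subst \<sigma> v)}"

lemma K_cong:
  assumes S: "SWF ar \<Sigma>" and w: "wfs ar \<sigma>"
  shows "congruence ar (FA ar \<Sigma>) (K ar \<Sigma> \<sigma>)"
  unfolding congruence_def
proof (intro conjI allI impI)
  show "equiv (carrier (FA ar \<Sigma>)) (K ar \<Sigma> \<sigma>)"
    unfolding equiv_def refl_on_def sym_def trans_def K_def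
    using FA_carrier_wf[OF S] wf_subst[OF _ w] by (auto intro: eqc.rfl eqc.sy eqc.tr)
next
  fix f xs ys
  assume a: "length xs = ar f \<and> length ys = ar f \<and> set xs \<subseteq> carrier (FA ar \<Sigma>) \<and> set ys \<subseteq> carrier (FA ar \<Sigma>)
     \<and> list_all2 (\<lambda>x y. (x, y) \<in> K ar \<Sigma> \<sigma>) xs ys"
  have wx: "wf_trm ar (Fn f xs)" "wf_trm ar (Fn f ys)" using a FA_carrier_wf[OF S] by auto
  have "list_all2 (eqc ar \<Sigma>) (map (subst \<sigma>) xs) (map (subst \<sigma>) ys)"
    using a by (auto simp: list_all2_map1 list_all2_map2 K_def elim: list_all2_mono)
  then have m: "eqc ar \<Sigma> (subst \<sigma> (Fn f xs)) (subst \<sigma> (Fn f ys))"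
    using a by (auto intro: eqc.cg)
  have e1: "eqc ar \<Sigma> (subst \<sigma> (rep ar \<Sigma> (Fn f xs))) (subst \<sigma> (Fn f xs))"
    using eqc_subst[OF rep_eqc[OF wx(1)] w] .
  have e2: "eqc ar \<Sigma> (subst \<sigma> (rep ar \<Sigma> (Fn f ys))) (subst \<sigma> (Fn f ys))"
    using eqc_subst[OF rep_eqc[OF wx(2)] w] .
  have "eqc ar \<Sigma> (subst \<sigma> (rep ar \<Sigma> (Fn f xs))) (subst \<sigma> (rep ar \<Sigma> (Fn f ys)))"
    using e1 e2 m by (meson eqc.sy eqc.tr)
  moreover have "rep ar \<Sigma> (Fn f xs) \<in> carrier (FA ar \<Sigma>)" "rep ar \<Sigma> (Fn f ys) \<in> carrier (FA ar \<Sigma>)"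
    using wx unfolding FA_def by auto
  ultimately show "(ops (FA ar \<Sigma>) f xs, ops (FA ar \<Sigma>) f ys) \<in> K ar \<Sigma> \<sigma>"
    unfolding K_def by (simp add: FA_def)
qed

lemma K_var:
  assumes "wfs ar \<sigma>" "\<sigma> i = \<sigma> j"
  shows "(rep ar \<Sigma> (Var i), rep ar \<Sigma> (Var j)) \<in> K ar \<Sigma> \<sigma>"
proof -
  have a: "eqc ar \<Sigma> (subst \<sigma> (rep ar \<Sigma> (Var k))) (\<sigma> k)" for k
    using eqc_subst[OF rep_eqc[of ar "Var k" \<Sigma>] assms(1)] by simp
  show ?thesis unfolding K_def using var_in_FA a[of i] a[of j] assms(2) by (auto intro: eqc.sy eqc.tr)
qed



lemma cong_sub: "congruence ar A \<theta> \<Longrightarrow> (x, y) \<in> \<theta> \<Longrightarrow> x \<in> carrier A \<and> y \<in> carrier A"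
  unfolding congruence_def equiv_def refl_on_def by blast

lemma cong_refl: "congruence ar A \<theta> \<Longrightarrow> x \<in> carrier A \<Longrightarrow> (x, x) \<in> \<theta>"
  unfolding congruence_def equiv_def refl_on_def by blast

lemma cong_sym: "congruence ar A \<theta> \<Longrightarrow> (x, y) \<in> \<theta> \<Longrightarrow> (y, x) \<in> \<theta>"
  unfolding congruence_def equiv_def by (blast dest: symD)

lemma cong_symI: "congruence ar A \<theta> \<Longrightarrow> sym \<theta>"
  unfolding congruence_def equiv_def by blast

lemma cong_transI: "congruence ar A \<theta> \<Longrightarrow> trans \<theta>"
  unfolding congruence_def equiv_def by blast

lemma cong_trans: "congruence ar A \<theta> \<Longrightarrow> (x, y) \<in> \<theta> \<Longrightarrow> (y, z) \<in> \<theta> \<Longrightarrow> (x, z) \<in> \<theta>"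
  unfolding congruence_def equiv_def by (blast dest: transD)

lemma cong_int: "congruence ar A \<alpha> \<Longrightarrow> congruence ar A \<gamma> \<Longrightarrow> congruence ar A (\<alpha> \<inter> \<gamma>)"
  unfolding congruence_def
proof (intro conjI allI impI)
  assume a: "equiv (carrier A) \<alpha> \<and> (\<forall>f xs ys. length xs = ar f \<and> length ys = ar f \<and> set xs \<subseteq> carrier A \<and> set ys \<subseteq> carrier A \<and> list_all2 (\<lambda>x y. (x, y) \<in> \<alpha>) xs ys \<longrightarrow> (ops A f xs, ops A f ys) \<in> \<alpha>)"
    and g: "equiv (carrier A) \<gamma> \<and> (\<forall>f xs ys. length xs = ar f \<and> length ys = ar f \<and> set xs \<subseteq> carrier A \<and> set ys \<subseteq> carrier A \<and> list_all2 (\<lambda>x y. (x, y) \<in> \<gamma>) xs ys \<longrightarrow> (ops A f xs, ops A f ys) \<in> \<gamma>)"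
  show "equiv (carrier A) (\<alpha> \<inter> \<gamma>)" using a g unfolding equiv_def refl_on_def sym_def trans_def by blast
  fix f xs ys assume h: "length xs = ar f \<and> length ys = ar f \<and> set xs \<subseteq> carrier A \<and> set ys \<subseteq> carrier A \<and> list_all2 (\<lambda>x y. (x, y) \<in> \<alpha> \<inter> \<gamma>) xs ys"
  have "list_all2 (\<lambda>x y. (x, y) \<in> \<alpha>) xs ys" "list_all2 (\<lambda>x y. (x, y) \<in> \<gamma>) xs ys"
    using h by (auto elim: list_all2_mono)
  then show "(ops A f xs, ops A f ys) \<in> \<alpha> \<inter> \<gamma>" using a g h by blast
qed

lemma mod_base: "alg_mk_modular ar 1 2 A"
  unfolding alg_mk_modular_def
proof (intro allI impI subsetI)
  fix \<alpha> \<beta> \<gamma> xy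
  assume c: "congruence ar A \<alpha> \<and> congruence ar A \<beta> \<and> congruence ar A \<gamma>"
    and xy: "xy \<in> \<alpha> \<inter> comp_alt \<beta> (\<alpha> \<inter> \<gamma>) 1"
  obtain x y where [simp]: "xy = (x, y)" by (cases xy)
  have "(x, y) \<in> \<alpha> \<inter> \<beta>" using xy by simp
  moreover have "(y, y) \<in> \<alpha> \<inter> \<gamma>" using c xy cong_sub cong_refl by (metis IntI IntD1 \<open>xy = (x,y)\<close>)
  ultimately show "xy \<in> comp_alt (\<alpha> \<inter> \<beta>) (\<alpha> \<inter> \<gamma>) 2"
    by (auto simp: numeral_2_eq_2)
qed

lemma comp_alt_merge_even_odd:
  assumes "trans Y" "even w" "w \<ge> 2"
  shows "comp_alt X Y w O comp_alt Y X (2*m+1) \<subseteq> comp_alt X Y (w + 2*m)"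
proof -
  obtain v where v: "w = v + 1" "odd v"
    using assms by (intro that[of "w - 1"]) auto
  have e1: "comp_alt X Y w = comp_alt X Y v O Y" using v comp_alt_add[of X Y v 1] by simp
  have e2: "comp_alt Y X (2*m+1) = Y O comp_alt X Y (2*m)" by simp
  have e3: "comp_alt X Y (w + 2*m) = comp_alt X Y v O (Y O comp_alt X Y (2*m))"
    using comp_alt_add[of X Y v "2*m+1"] v by (simp add: add.commute add.left_commute)
  have "Y O Y \<subseteq> Y" using assms(1) by (auto dest: transD)
  then have "comp_alt X Y v O Y O (Y O comp_alt X Y (2*m)) \<subseteq> comp_alt X Y v O (Y O comp_alt X Y (2*m))"
    by blast
  then show ?thesis unfolding e1 e2 e3 by (simp add: O_assoc)
qed



lemma day_step:
  fixes A :: "('f, 'a) alg" and M :: "nat \<Rightarrow> 'a \<Rightarrow> 'a \<Rightarrow> 'a \<Rightarrow> 'a \<Rightarrow> 'a"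
  assumes comp: "\<And>i \<theta> a a' b b' c c' d d'. i \<le> 2*r \<Longrightarrow> congruence ar A \<theta> \<Longrightarrow> (a,a')\<in>\<theta> \<Longrightarrow> (b,b')\<in>\<theta>
        \<Longrightarrow> (c,c')\<in>\<theta> \<Longrightarrow> (d,d')\<in>\<theta> \<Longrightarrow> (M i a b c d, M i a' b' c' d') \<in> \<theta>"
    and first: "\<And>a b c d. a \<in> carrier A \<Longrightarrow> b \<in> carrier A \<Longrightarrow> c \<in> carrier A \<Longrightarrow> d \<in> carrier A \<Longrightarrow> M 0 a b c d = a"
    and last: "\<And>a b c d. a \<in> carrier A \<Longrightarrow> b \<in> carrier A \<Longrightarrow> c \<in> carrier A \<Longrightarrow> d \<in> carrier A \<Longrightarrow> M (2*r) a b c d = d"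
    and idA: "\<And>i x y. i < 2*r \<Longrightarrow> x \<in> carrier A \<Longrightarrow> y \<in> carrier A \<Longrightarrow> M i x y y x = M (Suc i) x y y x"
    and idB: "\<And>i x v. i < 2*r \<Longrightarrow> even i \<Longrightarrow> x \<in> carrier A \<Longrightarrow> v \<in> carrier A \<Longrightarrow> M i x x v v = M (Suc i) x x v v"
    and idG: "\<And>i x y v. i < 2*r \<Longrightarrow> odd i \<Longrightarrow> x \<in> carrier A \<Longrightarrow> y \<in> carrier A \<Longrightarrow> v \<in> carrier A \<Longrightarrow> M i x y y v = M (Suc i) x y y v"
    and modu: "alg_mk_modular ar (2*g+1) w A" and we: "even w" "w \<ge> 2"
  shows "alg_mk_modular ar (4*g+3) (r*w) A"
  unfolding alg_mk_modular_def
proof (intro allI impI subsetI)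
  fix \<alpha> \<beta> \<gamma> xy
  assume cs: "congruence ar A \<alpha> \<and> congruence ar A \<beta> \<and> congruence ar A \<gamma>"
    and xy: "xy \<in> \<alpha> \<inter> comp_alt \<beta> (\<alpha> \<inter> \<gamma>) (4*g+3)"
  obtain a d where xyd[simp]: "xy = (a,d)" by (cases xy)
  define G where "G = \<alpha> \<inter> \<gamma>"
  define B where "B = \<alpha> \<inter> \<beta>"
  have cA: "congruence ar A \<alpha>" and cB0: "congruence ar A \<beta>" and cG: "congruence ar A G"
    and cBB: "congruence ar A B" using cs cong_int unfolding G_def B_def by auto
  define rel :: "nat \<Rightarrow> 'a rel" where "rel k = (if even k then \<beta> else G)" for k
  have crel: "congruence ar A (rel k)" for k using cB0 cG unfolding rel_def by auto
  have ad: "(a,d) \<in> \<alpha>" using xy by simp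
  obtain x where x0: "x 0 = a" and xN: "x (4*g+3) = d" and xs: "\<forall>k<4*g+3. (x k, x (Suc k)) \<in> rel k"
  proof -
    have adc: "(a,d) \<in> comp_alt \<beta> G (4*g+3)" using xy G_def by simp
    show ?thesis using adc[unfolded comp_alt_chain] that unfolding rel_def by blast
  qed
  have xC: "x k \<in> carrier A" if "k \<le> 4*g+3" for k
  proof (cases "k < 4*g+3")
    case True then show ?thesis using cong_sub[OF crel xs[rule_format, OF True]] by blast
  next
    case False then have "k = 4*g+3" using that by simp
    then show ?thesis using cong_sub[OF cA ad] xN by simp
  qed
  have relpar: "rel k = rel s" if "even (k+s)" for k s using that unfolding rel_def by auto
  have step1: "(x k, x (Suc k)) \<in> rel s" if "k < 4*g+3" "even (k+s)" for k s
    unfolding relpar[OF that(2), symmetric] using xs that(1) by blast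
  have step2: "(x (Suc k), x k) \<in> rel s" if "k < 4*g+3" "even (k+s)" for k s
    using cong_sym[OF crel step1[OF that]] .
  have reflx: "(x k, x k) \<in> rel s" if "k \<le> 4*g+3" for k s
    using cong_refl[OF crel xC[OF that]] .
  define c2 where "c2 s = x (if s \<le> g then 2*g+1-s else g+1)" for s
  define c3 where "c3 s = x (if s \<le> g then 2*g+2+s else 3*g+2)" for s
  define c4 where "c4 s = x (4*g+3-s)" for s
  have st1: "(x s, x (Suc s)) \<in> rel s" if "s \<le> g" for s
    using step1[of s s] that by auto
  have st2: "(c2 s, c2 (Suc s)) \<in> rel s" if "s \<le> g" for s
  proof (cases "s < g")
    case True
    have "(x (Suc (2*g-s)), x (2*g-s)) \<in> rel s" using step2[of "2*g-s" s] True by auto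
    moreover have "Suc (2*g-s) = 2*g+1-s" using True by auto
    ultimately show ?thesis unfolding c2_def using True by auto
  next
    case False then have "s = g" using that by simp
    then show ?thesis unfolding c2_def using reflx[of "g+1" s] by auto
  qed
  have st3: "(c3 s, c3 (Suc s)) \<in> rel s" if "s \<le> g" for s
  proof (cases "s < g")
    case True
    have "(x (2*g+2+s), x (Suc (2*g+2+s))) \<in> rel s" using step1[of "2*g+2+s" s] True by auto
    then show ?thesis unfolding c3_def using True by auto
  next
    case False then have "s = g" using that by simp
    then show ?thesis unfolding c3_def using reflx[of "3*g+2" s] by auto
  qed
  have st4: "(c4 s, c4 (Suc s)) \<in> rel s" if "s \<le> g" for s
  proof -
    have "(x (Suc (4*g+2-s)), x (4*g+2-s)) \<in> rel s" using step2[of "4*g+2-s" s] that by auto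
    moreover have "Suc (4*g+2-s) = 4*g+3-s" using that by auto
    ultimately show ?thesis unfolding c4_def by auto
  qed
  define T where "T i s = M i (x s) (c2 s) (c3 s) (c4 s)" for i s
  have Tstep: "(T i s, T i (Suc s)) \<in> rel s" if "i \<le> 2*r" "s \<le> g" for i s
    unfolding T_def using comp[OF that(1) crel st1[OF that(2)] st2[OF that(2)] st3[OF that(2)] st4[OF that(2)]] .
  define b where "b = x (2*g+1)"
  define c where "c = x (2*g+2)"
  define e where "e i = M i a b c d" for i
  have T0: "T i 0 = e i" for i unfolding T_def e_def c2_def c3_def c4_def b_def c_def using x0 xN by simp
  have Th: "T i (g+1) = M i (x (g+1)) (x (g+1)) (x (3*g+2)) (x (3*g+2))" for i
    unfolding T_def c2_def c3_def c4_def by (simp add: numeral_3_eq_3)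
  have aC: "a \<in> carrier A" and dC: "d \<in> carrier A" using cong_sub[OF cA ad] by blast+
  have bC: "b \<in> carrier A" and cC: "c \<in> carrier A" unfolding b_def c_def using xC by auto
  have bc: "(b, c) \<in> G" unfolding b_def c_def using step1[of "2*g+1" 1] unfolding rel_def by auto
  have Gsub: "G \<subseteq> \<alpha>" unfolding G_def by auto
  have elink: "(e i, e (Suc i)) \<in> comp_alt \<beta> G (2*g+1)" if i: "i < 2*r" "even i" for i
  proof -
    define f where "f s = (if s \<le> g then T i s else T (Suc i) (2*g+1-s))" for s
    have "\<forall>s<2*g+1. (f s, f (Suc s)) \<in> rel s"
    proof (intro allI impI)
      fix s assume s: "s < 2*g+1"
      consider "s < g" | "s = g" | "s > g" by linarith
      then show "(f s, f (Suc s)) \<in> rel s"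
      proof cases
        case 1 then show ?thesis unfolding f_def using Tstep[of i s] i by auto
      next
        case 2
        have h1: "(T i g, T i (g+1)) \<in> rel g" using Tstep[of i g] i by auto
        have h2: "(T (Suc i) g, T (Suc i) (g+1)) \<in> rel g" using Tstep[of "Suc i" g] i by auto
        have h3: "T i (g+1) = T (Suc i) (g+1)" unfolding Th using idB i xC by auto
        have h2': "(T (Suc i) (g+1), T (Suc i) g) \<in> rel g" using cong_sym[OF crel h2] .
        have "(T i g, T (Suc i) g) \<in> rel g" using cong_trans[OF crel h1] h2' h3 by simp
        moreover have "2*g+1 - Suc g = g" by simp
        ultimately show ?thesis unfolding f_def using 2 by auto
      next
        case 3
        define t where "t = 2*g - s"
        have t: "t \<le> g" "Suc t = 2*g+1-s" "even (t+s)" using 3 s unfolding t_def by auto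
        have tt: "(T (Suc i) t, T (Suc i) (Suc t)) \<in> rel t" using Tstep[of "Suc i" t] t i by auto
        have "(T (Suc i) (Suc t), T (Suc i) t) \<in> rel s" using cong_sym[OF crel tt] relpar[OF t(3)] by simp
        moreover have "2*g+1 - Suc s = t" unfolding t_def by simp
        ultimately show ?thesis unfolding f_def using 3 t(2) by auto
      qed
    qed
    moreover have "f 0 = e i" unfolding f_def using T0 by simp
    moreover have "f (2*g+1) = e (Suc i)" unfolding f_def using T0 by simp
    ultimately show ?thesis unfolding comp_alt_chain rel_def by blast
  qed
  have alink: "(e i, e (Suc i)) \<in> \<alpha>" if i: "i < 2*r" for i
  proof -
    have bca: "(b, c) \<in> \<alpha>" using bc Gsub by blast
    have ca: "(c, b) \<in> \<alpha>" "(d, a) \<in> \<alpha>" using cong_sym[OF cA bca] cong_sym[OF cA ad] by auto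
    have h1: "(e i, M i a b b a) \<in> \<alpha>" unfolding e_def
      using comp[OF _ cA cong_refl[OF cA aC] cong_refl[OF cA bC] ca] i by simp
    have h2: "(e (Suc i), M (Suc i) a b b a) \<in> \<alpha>" unfolding e_def
      using comp[OF _ cA cong_refl[OF cA aC] cong_refl[OF cA bC] ca] i by simp
    have h3: "M i a b b a = M (Suc i) a b b a" using idA i aC bC by simp
    have h1': "(e i, M (Suc i) a b b a) \<in> \<alpha>" using h1 h3 by simp
    show ?thesis using cong_trans[OF cA h1' cong_sym[OF cA h2]] .
  qed
  have glink: "(e i, e (Suc i)) \<in> G" if i: "i < 2*r" "odd i" for i
  proof -
    have cb: "(c, b) \<in> G" using cong_sym[OF cG bc] .
    have h1: "(e i, M i a b b d) \<in> G" unfolding e_def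
      using comp[OF _ cG cong_refl[OF cG aC] cong_refl[OF cG bC] cb cong_refl[OF cG dC]] i by simp
    have h2: "(e (Suc i), M (Suc i) a b b d) \<in> G" unfolding e_def
      using comp[OF _ cG cong_refl[OF cG aC] cong_refl[OF cG bC] cb cong_refl[OF cG dC]] i by simp
    have h3: "M i a b b d = M (Suc i) a b b d" using idG i aC bC dC by simp
    have h1': "(e i, M (Suc i) a b b d) \<in> G" using h1 h3 by simp
    show ?thesis using cong_trans[OF cG h1' cong_sym[OF cG h2]] .
  qed
  have blink: "(e i, e (Suc i)) \<in> comp_alt B G w" if i: "i < 2*r" "even i" for i
    using modu cs elink[OF i] alink[OF i(1)] unfolding alg_mk_modular_def B_def G_def by blast
  have trG: "trans G" using cG cong_transI by blast
  have ind: "(e 0, e (2*k)) \<in> comp_alt B G (k*w)" if "k \<le> r" for k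
    using that
  proof (induction k)
    case 0 then show ?case by simp
  next
    case (Suc k)
    have "(e (2*k), e (Suc (2*k))) \<in> comp_alt B G w" using blink[of "2*k"] Suc by auto
    moreover have "(e (Suc (2*k)), e (Suc (Suc (2*k)))) \<in> G" using glink[of "Suc (2*k)"] Suc by auto
    ultimately have "(e (2*k), e (2*Suc k)) \<in> comp_alt B G w"
      using comp_alt_end_even[OF we trG, of B] by auto
    moreover have "(e 0, e (2*k)) \<in> comp_alt B G (k*w)" using Suc by auto
    moreover have "comp_alt B G (k*w + w) = comp_alt B G (k*w) O comp_alt B G w"
      by (rule comp_alt_add_even) (use we in simp)
    ultimately show ?case by (auto simp: add.commute)
  qed
  have "e 0 = a" unfolding e_def using first aC bC cC dC by simp
  moreover have "e (2*r) = d" unfolding e_def using last aC bC cC dC by simp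
  ultimately have "(a, d) \<in> comp_alt B G (r*w)" using ind[of r] by simp
  then show "xy \<in> comp_alt (\<alpha> \<inter> \<beta>) (\<alpha> \<inter> \<gamma>) (r*w)" unfolding B_def G_def by simp
qed



lemma gumm_step:
  fixes A :: "('f, 'a) alg" and P :: "'a \<Rightarrow> 'a \<Rightarrow> 'a \<Rightarrow> 'a" and J :: "nat \<Rightarrow> 'a \<Rightarrow> 'a \<Rightarrow> 'a \<Rightarrow> 'a"
  assumes compP: "\<And>\<theta> a a' b b' c c'. congruence ar A \<theta> \<Longrightarrow> (a,a')\<in>\<theta> \<Longrightarrow> (b,b')\<in>\<theta> \<Longrightarrow> (c,c')\<in>\<theta>
        \<Longrightarrow> (P a b c, P a' b' c') \<in> \<theta>"
    and compJ: "\<And>i \<theta> a a' b b' c c'. 1 \<le> i \<Longrightarrow> i \<le> n+1 \<Longrightarrow> congruence ar A \<theta> \<Longrightarrow> (a,a')\<in>\<theta> \<Longrightarrow> (b,b')\<in>\<theta>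
        \<Longrightarrow> (c,c')\<in>\<theta> \<Longrightarrow> (J i a b c, J i a' b' c') \<in> \<theta>"
    and j_xyx: "\<And>i x y. 1 \<le> i \<Longrightarrow> i \<le> n+1 \<Longrightarrow> x \<in> carrier A \<Longrightarrow> y \<in> carrier A \<Longrightarrow> J i x y x = x"
    and p_xzz: "\<And>x z. x \<in> carrier A \<Longrightarrow> z \<in> carrier A \<Longrightarrow> P x z z = x"
    and p_xxz: "\<And>x z. x \<in> carrier A \<Longrightarrow> z \<in> carrier A \<Longrightarrow> P x x z = J 1 x x z"
    and j_odd: "\<And>i x z. 1 \<le> i \<Longrightarrow> i \<le> n \<Longrightarrow> odd i \<Longrightarrow> x \<in> carrier A \<Longrightarrow> z \<in> carrier A \<Longrightarrow> J i x z z = J (Suc i) x z z"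
    and j_even: "\<And>i x z. 1 \<le> i \<Longrightarrow> i \<le> n \<Longrightarrow> even i \<Longrightarrow> x \<in> carrier A \<Longrightarrow> z \<in> carrier A \<Longrightarrow> J i x x z = J (Suc i) x x z"
    and j_last: "\<And>x y z. x \<in> carrier A \<Longrightarrow> y \<in> carrier A \<Longrightarrow> z \<in> carrier A \<Longrightarrow> J (n+1) x y z = z"
    and modu: "alg_mk_modular ar (2*g+1) w A" and we: "even w" "w \<ge> 2"
  shows "alg_mk_modular ar (4*g+3) (w + 2*(2*g+1)*n) A"
  unfolding alg_mk_modular_def
proof (intro allI impI subsetI)
  fix \<alpha> \<beta> \<gamma> xy
  assume cs: "congruence ar A \<alpha> \<and> congruence ar A \<beta> \<and> congruence ar A \<gamma>"
    and xy: "xy \<in> \<alpha> \<inter> comp_alt \<beta> (\<alpha> \<inter> \<gamma>) (4*g+3)"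
  define G where "G = \<alpha> \<inter> \<gamma>"
  define B where "B = \<alpha> \<inter> \<beta>"
  have cA: "congruence ar A \<alpha>" and cB0: "congruence ar A \<beta>" and cG: "congruence ar A G"
    and cBB: "congruence ar A B" using cs cong_int unfolding G_def B_def by auto
  define rel :: "nat \<Rightarrow> 'a rel" where "rel k = (if even k then \<beta> else G)" for k
  have crel: "congruence ar A (rel k)" for k using cB0 cG unfolding rel_def by auto
  have relpar: "rel k = rel s" if "even (k+s)" for k s using that unfolding rel_def by auto
  have Gsub: "G \<subseteq> \<alpha>" unfolding G_def by auto
  have trG: "trans G" using cG cong_transI by blast
  have trB: "trans B" using cBB cong_transI by blast
  have syG: "sym G" using cG cong_symI by blast
  have syB: "sym B" using cBB cong_symI by blast
  have syb: "sym \<beta>" using cB0 cong_symI by blast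
  have core: "(a, d) \<in> comp_alt G B (w + 2*(2*g+1)*n)"
    if ad: "(a, d) \<in> \<alpha>" and adc: "(a, d) \<in> comp_alt \<beta> G (4*g+3)" for a d
  proof -
    obtain x where x0: "x 0 = a" and xN: "x (4*g+3) = d" and xs: "\<forall>k<4*g+3. (x k, x (Suc k)) \<in> rel k"
      using adc[unfolded comp_alt_chain] unfolding rel_def by blast
    have xC: "x k \<in> carrier A" if "k \<le> 4*g+3" for k
    proof (cases "k < 4*g+3")
      case True then show ?thesis using cong_sub[OF crel xs[rule_format, OF True]] by blast
    next
      case False then have "k = 4*g+3" using that by simp
      then show ?thesis using cong_sub[OF cA ad] xN by simp
    qed
    have step1: "(x k, x (Suc k)) \<in> rel s" if "k < 4*g+3" "even (k+s)" for k s
      unfolding relpar[OF that(2), symmetric] using xs that(1) by blast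
    have step2: "(x (Suc k), x k) \<in> rel s" if "k < 4*g+3" "even (k+s)" for k s
      using cong_sym[OF crel step1[OF that]] .
    have aC: "a \<in> carrier A" and dC: "d \<in> carrier A" using cong_sub[OF cA ad] by blast+
    have da: "(d, a) \<in> \<alpha>" using cong_sym[OF cA ad] .
    define b where "b = x (2*g+1)"
    define c where "c = x (2*g+2)"
    have bC: "b \<in> carrier A" and cC: "c \<in> carrier A" unfolding b_def c_def using xC by auto
    have cb: "(c, b) \<in> G" unfolding b_def c_def using step2[of "2*g+1" 1] unfolding rel_def by auto
    have pchain: "(P a a d, P a b c) \<in> comp_alt \<beta> G (2*g+1)"
    proof -
      define f where "f s = P a (x s) (x (4*g+3-s))" for s
      have "\<forall>s<2*g+1. (f s, f (Suc s)) \<in> rel s"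
      proof (intro allI impI)
        fix s assume s: "s < 2*g+1"
        have "(x (Suc (4*g+2-s)), x (4*g+2-s)) \<in> rel s" using step2[of "4*g+2-s" s] s by auto
        moreover have "Suc (4*g+2-s) = 4*g+3-s" "4*g+3 - Suc s = 4*g+2-s" using s by auto
        ultimately have "(x (4*g+3-s), x (4*g+3 - Suc s)) \<in> rel s" by simp
        moreover have "(x s, x (Suc s)) \<in> rel s" using step1[of s s] s by auto
        moreover have "(a, a) \<in> rel s" using cong_refl[OF crel aC] .
        ultimately show "(f s, f (Suc s)) \<in> rel s" unfolding f_def using compP[OF crel] by blast
      qed
      moreover have "f 0 = P a a d" unfolding f_def using x0 xN by simp
      moreover have "f (2*g+1) = P a b c" unfolding f_def b_def c_def
        by (simp add: numeral_3_eq_3 algebra_simps)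
      ultimately show ?thesis unfolding comp_alt_chain rel_def by (metis (no_types))
    qed
    have pa1: "(P a a d, a) \<in> \<alpha>"
    proof -
      have "(J 1 a a d, J 1 a a a) \<in> \<alpha>" using compJ[OF _ _ cA cong_refl[OF cA aC] cong_refl[OF cA aC] da, of 1] by simp
      then show ?thesis using p_xxz aC dC j_xyx[of 1 a a] by simp
    qed
    have pa2: "(P a b c, a) \<in> G"
    proof -
      have "(P a b c, P a b b) \<in> G" using compP[OF cG cong_refl[OF cG aC] cong_refl[OF cG bC] cb] .
      then show ?thesis using p_xzz aC bC by simp
    qed
    have pa2a: "(P a b c, a) \<in> \<alpha>" using pa2 Gsub by blast
    have "(P a a d, P a b c) \<in> \<alpha>" using cong_trans[OF cA pa1 cong_sym[OF cA pa2a]] .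
    then have "(P a a d, P a b c) \<in> comp_alt B G w"
      using modu cs pchain unfolding alg_mk_modular_def B_def G_def by blast
    then have "(P a a d, a) \<in> comp_alt B G w" using pa2 comp_alt_end_even[OF we trG, of B] by blast
    then have pl: "(a, P a a d) \<in> comp_alt G B w" using comp_alt_converse[OF syB syG, of w] we by auto
    have jl: "(J i a a d, J i a d d) \<in> comp_alt B G (4*g+3)" if i0: "1 \<le> i" "i \<le> n" for i
    proof -
      have i: "1 \<le> i" "i \<le> n+1" using i0 by auto
      define f where "f s = J i a (x s) d" for s
      have fa: "(f s, a) \<in> \<alpha>" if "s \<le> 4*g+3" for s
      proof -
        have "(f s, J i a (x s) a) \<in> \<alpha>" unfolding f_def
          using compJ[OF i cA cong_refl[OF cA aC] cong_refl[OF cA xC[OF that]] da] .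
        then show ?thesis using j_xyx i aC xC[OF that] by simp
      qed
      have "\<forall>s<4*g+3. (f s, f (Suc s)) \<in> (if even s then B else G)"
      proof (intro allI impI)
        fix s assume s: "s < 4*g+3"
        have "(f s, f (Suc s)) \<in> rel s" unfolding f_def
          using compJ[OF i crel cong_refl[OF crel aC] step1[of s s] cong_refl[OF crel dC]] s by simp
        moreover have "(f s, f (Suc s)) \<in> \<alpha>" using cong_trans[OF cA fa[of s] cong_sym[OF cA fa[of "Suc s"]]] s by simp
        ultimately show "(f s, f (Suc s)) \<in> (if even s then B else G)"
          unfolding rel_def B_def G_def by auto
      qed
      moreover have "f 0 = J i a a d" "f (4*g+3) = J i a d d" unfolding f_def using x0 xN by auto
      ultimately show ?thesis unfolding comp_alt_chain by (metis (no_types))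
    qed
    define V where "V i = (if odd i then J i a a d else J i a d d)" for i
    have vlink: "(V i, V (Suc i)) \<in> comp_alt B G (4*g+3)" if i: "1 \<le> i" "i \<le> n" for i
    proof (cases "odd i")
      case True
      then have "V (Suc i) = J i a d d" unfolding V_def using j_odd[OF i True aC dC] by simp
      then show ?thesis using jl[OF i] True unfolding V_def by simp
    next
      case False
      then have "V (Suc i) = J i a a d" unfolding V_def using j_even[OF i _ aC dC] by simp
      moreover have "(J i a d d, J i a a d) \<in> comp_alt B G (4*g+3)"
        using jl[OF i] comp_alt_converse[OF syB syG, of "4*g+3"] by auto
      ultimately show ?thesis using False unfolding V_def by simp
    qed
    have V1C: "V 1 \<in> carrier A" using cong_sub[OF cA pa1] p_xxz[OF aC dC] unfolding V_def by simp
    have ind: "(V 1, V (Suc k)) \<in> comp_alt B G (2*((2*g+1)*k)+1)" if "k \<le> n" for k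
      using that
    proof (induction k)
      case 0 then show ?case using cong_refl[OF cBB V1C] by simp
    next
      case (Suc k)
      have v0: "(V (Suc k), V (Suc (Suc k))) \<in> comp_alt B G (4*g+3)"
        by (rule vlink) (use Suc.prems in auto)
      have e: "comp_alt B G (4*g+3) = comp_alt B G (2*(2*g+1)+1)"
        by (rule arg_cong[where f="comp_alt B G"]) simp
      have IH: "(V 1, V (Suc k)) \<in> comp_alt B G (2*((2*g+1)*k)+1)" using Suc by simp
      have m: "comp_alt B G (2*((2*g+1)*k)+1) O comp_alt B G (2*(2*g+1)+1) \<subseteq> comp_alt B G (2*((2*g+1)*k)+2*(2*g+1)+1)"
        by (rule comp_alt_merge_odd[OF trB])
      have e2: "comp_alt B G (2*((2*g+1)*k)+2*(2*g+1)+1) = comp_alt B G (2*((2*g+1)*Suc k)+1)"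
        by (rule arg_cong[where f="comp_alt B G"]) (simp add: algebra_simps)
      show ?case using m e2 IH v0 e by blast
    qed
    have "V 1 = P a a d" unfolding V_def using p_xxz aC dC by simp
    moreover have "V (Suc n) = d" unfolding V_def using j_last aC dC by simp
    ultimately have "(P a a d, d) \<in> comp_alt B G (2*((2*g+1)*n)+1)" using ind[of n] by simp
    then have "(a, d) \<in> comp_alt G B w O comp_alt B G (2*((2*g+1)*n)+1)" using pl by blast
    then show ?thesis using comp_alt_merge_even_odd[OF trB we, of G "(2*g+1)*n"]
      by (auto simp: algebra_simps)
  qed
  obtain a d where xyd[simp]: "xy = (a,d)" by (cases xy)
  have "(d, a) \<in> \<alpha>" using cong_sym[OF cA] xy by simp
  moreover have "(d, a) \<in> comp_alt \<beta> G (4*g+3)"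
    using xy comp_alt_converse[OF syb syG, of "4*g+3"] unfolding G_def by auto
  ultimately have "(d, a) \<in> comp_alt G B (w + 2*(2*g+1)*n)" by (rule core)
  then have "(a, d) \<in> comp_alt B G (w + 2*(2*g+1)*n)"
    using comp_alt_converse[OF syG syB, of "w + 2*(2*g+1)*n"] we by auto
  then show "xy \<in> comp_alt (\<alpha> \<inter> \<beta>) (\<alpha> \<inter> \<gamma>) (w + 2*(2*g+1)*n)" unfolding B_def G_def by simp
qed



lemma iter_day:
  assumes step: "\<And>g w. alg_mk_modular ar (2*g+1) w A \<Longrightarrow> even w \<Longrightarrow> w \<ge> 2 \<Longrightarrow> alg_mk_modular ar (4*g+3) (r*w) A"
    and r: "r \<ge> 1"
  shows "alg_mk_modular ar (2^(k+1) - 1) (2*r^k) A"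
proof (induction k)
  case 0 then show ?case using mod_base by simp
next
  case (Suc k)
  define g :: nat where "g = 2^k - 1"
  have p: "(1::nat) \<le> 2^k" by simp
  have q1: "(2::nat)^(k+1) = 2*2^k" "(2::nat)^(Suc k+1) = 4*2^k" by simp_all
  have e1: "2^(k+1) - 1 = 2*g+1" unfolding g_def using p q1 by linarith
  have e2: "2^(Suc k+1) - 1 = 4*g+3" unfolding g_def using p q1 by linarith
  have "r^k \<ge> 1" using r by simp
  then have "alg_mk_modular ar (4*g+3) (r*(2*r^k)) A" using step[of g "2*r^k"] Suc e1 by simp
  then show ?case using e2 by (simp add: algebra_simps)
qed

fun Wf :: "nat \<Rightarrow> nat \<Rightarrow> nat \<Rightarrow> nat \<Rightarrow> nat" where
  "Wf W0 q n 0 = W0"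
| "Wf W0 q n (Suc j) = Wf W0 q n j + 2*(2^(j+q+1) - 1)*n"

lemma Wf_ge: "Wf W0 q n j \<ge> W0" by (induction j) auto
lemma Wf_even: "even W0 \<Longrightarrow> even (Wf W0 q n j)" by (induction j) auto

lemma Wf_int: "int (Wf W0 q n j) = int W0 + int n * (2^(q+2)*(2^j - 1) - 2*int j)"
proof (induction j)
  case 0 then show ?case by simp
next
  case (Suc j)
  have p: "(1::nat) \<le> 2^(j+q+1)" by simp
  have "int (2^(j+q+1) - 1) = 2^(j+q+1) - 1" using p by (simp add: of_nat_diff)
  then have "int (Wf W0 q n (Suc j)) = int (Wf W0 q n j) + 2*(2^(j+q+1) - 1)*int n" by simp
  also have "\<dots> = int W0 + int n * (2^(q+2)*(2^j - 1) - 2*int j) + 2*(2^(j+q+1) - 1)*int n"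
    using Suc by simp
  also have "\<dots> = int W0 + int n * (2^(q+2)*(2^(Suc j) - 1) - 2*int (Suc j))"
    by (simp add: algebra_simps power_add)
  finally show ?case .
qed

lemma iter_gumm:
  assumes step: "\<And>g w. alg_mk_modular ar (2*g+1) w A \<Longrightarrow> even w \<Longrightarrow> w \<ge> 2 \<Longrightarrow> alg_mk_modular ar (4*g+3) (w + 2*(2*g+1)*n) A"
    and base: "alg_mk_modular ar (2^(q+1) - 1) W0 A" and ev: "even W0" and ge: "W0 \<ge> 2"
  shows "alg_mk_modular ar (2^(j+q+1) - 1) (Wf W0 q n j) A"
proof (induction j)
  case 0 then show ?case using base by simp
next
  case (Suc j)
  define g :: nat where "g = 2^(j+q) - 1"
  have p: "(1::nat) \<le> 2^(j+q)" by simp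
  have q1: "(2::nat)^(j+q+1) = 2*2^(j+q)" "(2::nat)^(Suc j+q+1) = 4*2^(j+q)" by simp_all
  have e1: "2^(j+q+1) - 1 = 2*g+1" unfolding g_def using p q1 by linarith
  have e2: "2^(Suc j+q+1) - 1 = 4*g+3" unfolding g_def using p q1 by linarith
  have "alg_mk_modular ar (4*g+3) (Wf W0 q n j + 2*(2*g+1)*n) A"
    using step[of g "Wf W0 q n j"] Suc e1 Wf_even[OF ev] Wf_ge[of W0 q n j] ge by simp
  then show ?case using e2 e1 by simp
qed



definition env4 :: "'a \<Rightarrow> 'a \<Rightarrow> 'a \<Rightarrow> 'a \<Rightarrow> nat \<Rightarrow> 'a" where
  "env4 a b c d v = (if v = 1 then b else if v = 2 then c else if v = 3 then d else a)"

definition env3 :: "'a \<Rightarrow> 'a \<Rightarrow> 'a \<Rightarrow> nat \<Rightarrow> 'a" where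
  "env3 a b c v = (if v = 0 then a else if v = 1 then b else c)"

definition sA :: "nat \<Rightarrow> ('f, nat) trm" where "sA v = (if v = 1 \<or> v = 2 then Var 1 else Var 0)"
definition sB :: "nat \<Rightarrow> ('f, nat) trm" where "sB v = (if v = 2 \<or> v = 3 then Var 2 else Var 0)"
definition sG :: "nat \<Rightarrow> ('f, nat) trm" where
  "sG v = (if v = 1 \<or> v = 2 then Var 1 else if v = 3 then Var 3 else Var 0)"

lemma wfs_sA: "wfs ar sA" and wfs_sB: "wfs ar sB" and wfs_sG: "wfs ar sG"
  unfolding wfs_def sA_def sB_def sG_def by auto

lemma env_sA: "(\<lambda>v. eval A (env4 a b c d) (sA v)) = env4 a b b a"
  by (rule ext) (simp add: sA_def env4_def)
lemma env_sB: "(\<lambda>v. eval A (env4 a b c d) (sB v)) = env4 a a c c"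
  by (rule ext) (simp add: sB_def env4_def)
lemma env_sG: "(\<lambda>v. eval A (env4 a b c d) (sG v)) = env4 a b b d"
  by (rule ext) (simp add: sG_def env4_def)

lemma day_terms:
  fixes ar :: "'f \<Rightarrow> nat"
  assumes S: "SWF ar \<Sigma>" and m: "variety_mk_modular TYPE(('f, nat) trm) ar \<Sigma> 3 k"
  shows "\<exists>u. u 0 = rep ar \<Sigma> (Var 0) \<and> u k = rep ar \<Sigma> (Var 3) \<and> (\<forall>i\<le>k. wf_trm ar (u i)) \<and>
     (\<forall>i<k. eqc ar \<Sigma> (subst sA (u i)) (subst sA (u (Suc i))) \<and>
        (if even i then eqc ar \<Sigma> (subst sB (u i)) (subst sB (u (Suc i)))
         else eqc ar \<Sigma> (subst sG (u i)) (subst sG (u (Suc i)))))"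
proof -
  let ?F = "FA ar \<Sigma>"
  let ?a = "K ar \<Sigma> sA" and ?b = "K ar \<Sigma> sB" and ?g = "K ar \<Sigma> sG"
  have ca: "congruence ar ?F ?a" and cb: "congruence ar ?F ?b" and cg: "congruence ar ?F ?g"
    using K_cong[OF S] wfs_sA wfs_sB wfs_sG by blast+
  have mod: "alg_mk_modular ar 3 k ?F" using m FA_models[OF S] unfolding variety_mk_modular_def by simp
  let ?X = "\<lambda>i. rep ar \<Sigma> (Var i)"
  have x03: "(?X 0, ?X 3) \<in> ?a" by (rule K_var[OF wfs_sA]) (simp add: sA_def)
  have x01: "(?X 0, ?X 1) \<in> ?b" by (rule K_var[OF wfs_sB]) (simp add: sB_def)
  have x12a: "(?X 1, ?X 2) \<in> ?a" by (rule K_var[OF wfs_sA]) (simp add: sA_def)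
  have x12g: "(?X 1, ?X 2) \<in> ?g" by (rule K_var[OF wfs_sG]) (simp add: sG_def)
  have x12: "(?X 1, ?X 2) \<in> ?a \<inter> ?g" using x12a x12g by blast
  have x23: "(?X 2, ?X 3) \<in> ?b" by (rule K_var[OF wfs_sB]) (simp add: sB_def)
  have "(?X 0, ?X 3) \<in> comp_alt ?b (?a \<inter> ?g) 3"
  proof -
    have eq: "comp_alt ?b (?a \<inter> ?g) 3 = ?b O ((?a \<inter> ?g) O (?b O Id))" by (simp add: numeral_3_eq_3)
    show ?thesis unfolding eq using x01 x12 x23 by blast
  qed
  then have "(?X 0, ?X 3) \<in> comp_alt (?a \<inter> ?b) (?a \<inter> ?g) k"
    using mod ca cb cg x03 unfolding alg_mk_modular_def by blast
  then obtain f where f0: "f 0 = ?X 0" and fk: "f k = ?X 3"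
    and fs: "\<forall>i<k. (f i, f (Suc i)) \<in> (if even i then ?a \<inter> ?b else ?a \<inter> ?g)"
    unfolding comp_alt_chain by blast
  have fC: "f i \<in> carrier ?F" if "i \<le> k" for i
  proof (cases "i < k")
    case True then show ?thesis using fs unfolding K_def by (auto split: if_splits)
  next
    case False then show ?thesis using that fk var_in_FA by simp
  qed
  show ?thesis
  proof (intro exI[of _ f] conjI allI impI)
    show "f 0 = ?X 0" "f k = ?X 3" by (fact f0, fact fk)
  next
    fix i assume "i \<le> k" then show "wf_trm ar (f i)" using fC FA_carrier_wf[OF S] by blast
  next
    fix i assume i: "i < k"
    then show "eqc ar \<Sigma> (subst sA (f i)) (subst sA (f (Suc i)))"
      using fs unfolding K_def by (auto split: if_splits)
    show "if even i then eqc ar \<Sigma> (subst sB (f i)) (subst sB (f (Suc i)))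
         else eqc ar \<Sigma> (subst sG (f i)) (subst sG (f (Suc i)))"
      using fs i unfolding K_def by (auto split: if_splits)
  qed
qed

lemma wf_tern: "ternary_term ar t \<Longrightarrow> wf_trm ar (tern t (Var i) (Var j) (Var k))"
  unfolding tern_def ternary_term_def by (rule wf_subst) (auto simp: wfs_def)

lemma tern_eval:
  "ternary_term ar t \<Longrightarrow> eval A \<rho> (tern t (Var i) (Var j) (Var k)) = eval A (env3 (\<rho> i) (\<rho> j) (\<rho> k)) t"
  unfolding tern_def eval_subst ternary_term_def
  by (rule eval_cong) (auto simp: env3_def)

lemma env3_carrier: "a \<in> C \<Longrightarrow> b \<in> C \<Longrightarrow> c \<in> C \<Longrightarrow> \<forall>v. env3 a b c v \<in> C"
  by (simp add: env3_def)
lemma env4_carrier: "a \<in> C \<Longrightarrow> b \<in> C \<Longrightarrow> c \<in> C \<Longrightarrow> d \<in> C \<Longrightarrow> \<forall>v. env4 a b c d v \<in> C"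
  by (simp add: env4_def)

lemma sat_use:
  assumes "SWF ar \<Sigma>" "holds_in TYPE(('f, nat) trm) ar \<Sigma> s t" "wf_trm ar s" "wf_trm ar t"
    "models ar \<Sigma> (A :: ('f, 'a) alg)" "\<forall>v. \<rho> v \<in> carrier A"
  shows "eval A \<rho> s = eval A \<rho> t"
  using holds_transfer[OF assms(1-5)] assms(6) unfolding satisfies_def by blast



theorem theorem5p1:
  fixes ar :: "'f \<Rightarrow> nat"
    and \<Sigma> :: "(('f, nat) trm \<times> ('f, nat) trm) set"
    and r p q n :: nat
  assumes "r \<ge> 1" and "p \<ge> 1" and "q \<ge> 1"
    and "\<forall>(s, t)\<in>\<Sigma>. wf_trm ar s \<and> wf_trm ar t"
    and "variety_mk_modular TYPE(('f, nat) trm) ar \<Sigma> 3 (2 * r)"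
    and "has_gumm_terms TYPE(('f, nat) trm) ar \<Sigma> n"
  shows "variety_mk_modular TYPE('a) ar \<Sigma> (2 ^ p * 2 ^ q - 1)
           (nat (2 * int r ^ q + (2 ^ q * 2 ^ (p + 1) - 2 ^ (q + 2) - 2 * int p + 2) * int n))"
proof -
  have S: "SWF ar \<Sigma>" using assms(4) unfolding SWF_def .
  obtain u where u0: "u 0 = rep ar \<Sigma> (Var 0)" and uk: "u (2*r) = rep ar \<Sigma> (Var 3)"
    and uwf: "\<forall>i\<le>2*r. wf_trm ar (u i)"
    and ueq: "\<forall>i<2*r. eqc ar \<Sigma> (subst sA (u i)) (subst sA (u (Suc i))) \<and>
        (if even i then eqc ar \<Sigma> (subst sB (u i)) (subst sB (u (Suc i)))
         else eqc ar \<Sigma> (subst sG (u i)) (subst sG (u (Suc i))))"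
    using day_terms[OF S assms(5)] by blast
  obtain pp j where tp: "ternary_term ar pp" and tj: "\<forall>i\<in>{1..n+1}. ternary_term ar (j i)"
    and g1: "\<forall>i\<in>{1..n+1}. holds_in TYPE(('f, nat) trm) ar \<Sigma> (Var 0) (tern (j i) (Var 0) (Var 1) (Var 0))"
    and g2: "holds_in TYPE(('f, nat) trm) ar \<Sigma> (Var 0) (tern pp (Var 0) (Var 2) (Var 2))"
    and g3: "holds_in TYPE(('f, nat) trm) ar \<Sigma> (tern pp (Var 0) (Var 0) (Var 2)) (tern (j 1) (Var 0) (Var 0) (Var 2))"
    and g4: "\<forall>i. 1 \<le> i \<and> i \<le> n \<and> odd i \<longrightarrow> holds_in TYPE(('f, nat) trm) ar \<Sigma> (tern (j i) (Var 0) (Var 2) (Var 2)) (tern (j (i+1)) (Var 0) (Var 2) (Var 2))"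
    and g5: "\<forall>i. 1 \<le> i \<and> i \<le> n \<and> even i \<longrightarrow> holds_in TYPE(('f, nat) trm) ar \<Sigma> (tern (j i) (Var 0) (Var 0) (Var 2)) (tern (j (i+1)) (Var 0) (Var 0) (Var 2))"
    and g6: "holds_in TYPE(('f, nat) trm) ar \<Sigma> (tern (j (n+1)) (Var 0) (Var 1) (Var 2)) (Var 2)"
    using assms(6) unfolding has_gumm_terms_def Let_def by blast
  show ?thesis unfolding variety_mk_modular_def
  proof (intro allI impI)
    fix A :: "('f, 'a) alg" assume mA: "models ar \<Sigma> A"
    have alg: "is_alg ar A" using mA unfolding models_def by simp
    have snd: "eval A \<rho> s = eval A \<rho> t" if "eqc ar \<Sigma> s t" "\<forall>v. \<rho> v \<in> carrier A" for s t \<rho>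
      using eqc_sound[OF mA S that(1)] that(2) .
    define M where "M i a b c d = eval A (env4 a b c d) (u i)" for i a b c d
    have dstep: "alg_mk_modular ar (4*g+3) (r*w) A"
      if "alg_mk_modular ar (2*g+1) w A" "even w" "w \<ge> 2" for g w
    proof (rule day_step[of r ar A M, OF _ _ _ _ _ _ that])
      fix i \<theta> a a' b b' c c' d d'
      assume i: "i \<le> 2*r" and th: "congruence ar A \<theta>" "(a,a')\<in>\<theta>" "(b,b')\<in>\<theta>" "(c,c')\<in>\<theta>" "(d,d')\<in>\<theta>"
      have C: "a \<in> carrier A" "b \<in> carrier A" "c \<in> carrier A" "d \<in> carrier A"
        "a' \<in> carrier A" "b' \<in> carrier A" "c' \<in> carrier A" "d' \<in> carrier A"
        using cong_sub[OF th(1) th(2)] cong_sub[OF th(1) th(3)] cong_sub[OF th(1) th(4)] cong_sub[OF th(1) th(5)] by auto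
      have "\<forall>v. (env4 a b c d v, env4 a' b' c' d' v) \<in> \<theta>" using th by (simp add: env4_def)
      then show "(M i a b c d, M i a' b' c' d') \<in> \<theta>" unfolding M_def
        using eval_congr[OF th(1) alg env4_carrier[OF C(1-4)] env4_carrier[OF C(5-8)]] uwf i by blast
    next
      fix a b c d assume C: "a \<in> carrier A" "b \<in> carrier A" "c \<in> carrier A" "d \<in> carrier A"
      have "eval A (env4 a b c d) (rep ar \<Sigma> (Var 0)) = eval A (env4 a b c d) (Var 0)"
        by (rule snd[OF rep_eqc env4_carrier[OF C]]) simp
      then show "M 0 a b c d = a" unfolding M_def u0 by (simp add: env4_def)
    next
      fix a b c d assume C: "a \<in> carrier A" "b \<in> carrier A" "c \<in> carrier A" "d \<in> carrier A"
      have "eval A (env4 a b c d) (rep ar \<Sigma> (Var 3)) = eval A (env4 a b c d) (Var 3)"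
        by (rule snd[OF rep_eqc env4_carrier[OF C]]) simp
      then show "M (2*r) a b c d = d" unfolding M_def uk by (simp add: env4_def)
    next
      fix i x y assume i: "i < 2*r" and C: "x \<in> carrier A" "y \<in> carrier A"
      have "eval A (env4 x y y x) (subst sA (u i)) = eval A (env4 x y y x) (subst sA (u (Suc i)))"
        using snd ueq i env4_carrier[OF C(1) C(2) C(2) C(1)] by blast
      then show "M i x y y x = M (Suc i) x y y x" unfolding M_def eval_subst env_sA .
    next
      fix i x v assume i: "i < 2*r" "even i" and C: "x \<in> carrier A" "v \<in> carrier A"
      have "eval A (env4 x x v v) (subst sB (u i)) = eval A (env4 x x v v) (subst sB (u (Suc i)))"
        using snd ueq i env4_carrier[OF C(1) C(1) C(2) C(2)] by (metis (full_types))
      then show "M i x x v v = M (Suc i) x x v v" unfolding M_def eval_subst env_sB .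
    next
      fix i x y v assume i: "i < 2*r" "odd i" and C: "x \<in> carrier A" "y \<in> carrier A" "v \<in> carrier A"
      have "eval A (env4 x y y v) (subst sG (u i)) = eval A (env4 x y y v) (subst sG (u (Suc i)))"
        using snd ueq i env4_carrier[OF C(1) C(2) C(2) C(3)] by (metis (full_types))
      then show "M i x y y v = M (Suc i) x y y v" unfolding M_def eval_subst env_sG .
    qed
    define P where "P a b c = eval A (env3 a b c) pp" for a b c
    define J where "J i a b c = eval A (env3 a b c) (j i)" for i a b c
    have tj': "ternary_term ar (j i)" if "1 \<le> i" "i \<le> n+1" for i using tj that by auto
    have su: "eval A \<rho> s = eval A \<rho> t"
      if "holds_in TYPE(('f, nat) trm) ar \<Sigma> s t" "wf_trm ar s" "wf_trm ar t" "\<forall>v. \<rho> v \<in> carrier A" for s t \<rho>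
      using sat_use[OF S that(1-3) mA that(4)] .
    have gstep: "alg_mk_modular ar (4*g+3) (w + 2*(2*g+1)*n) A"
      if "alg_mk_modular ar (2*g+1) w A" "even w" "w \<ge> 2" for g w
    proof (rule gumm_step[of ar A P n J, OF _ _ _ _ _ _ _ _ that])
      fix \<theta> a a' b b' c c'
      assume th: "congruence ar A \<theta>" "(a,a')\<in>\<theta>" "(b,b')\<in>\<theta>" "(c,c')\<in>\<theta>"
      have C: "a \<in> carrier A" "b \<in> carrier A" "c \<in> carrier A"
        "a' \<in> carrier A" "b' \<in> carrier A" "c' \<in> carrier A"
        using cong_sub[OF th(1) th(2)] cong_sub[OF th(1) th(3)] cong_sub[OF th(1) th(4)] by auto
      have "\<forall>v. (env3 a b c v, env3 a' b' c' v) \<in> \<theta>" using th by (simp add: env3_def)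
      then show "(P a b c, P a' b' c') \<in> \<theta>" unfolding P_def
        using eval_congr[OF th(1) alg env3_carrier[OF C(1-3)] env3_carrier[OF C(4-6)]] tp
        unfolding ternary_term_def by blast
    next
      fix i \<theta> a a' b b' c c'
      assume i: "1 \<le> i" "i \<le> n+1" and th: "congruence ar A \<theta>" "(a,a')\<in>\<theta>" "(b,b')\<in>\<theta>" "(c,c')\<in>\<theta>"
      have C: "a \<in> carrier A" "b \<in> carrier A" "c \<in> carrier A"
        "a' \<in> carrier A" "b' \<in> carrier A" "c' \<in> carrier A"
        using cong_sub[OF th(1) th(2)] cong_sub[OF th(1) th(3)] cong_sub[OF th(1) th(4)] by auto
      have "\<forall>v. (env3 a b c v, env3 a' b' c' v) \<in> \<theta>" using th by (simp add: env3_def)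
      then show "(J i a b c, J i a' b' c') \<in> \<theta>" unfolding J_def
        using eval_congr[OF th(1) alg env3_carrier[OF C(1-3)] env3_carrier[OF C(4-6)]] tj'[OF i]
        unfolding ternary_term_def by blast
    next
      fix i x y assume i: "1 \<le> i" "i \<le> n+1" and C: "x \<in> carrier A" "y \<in> carrier A"
      have "eval A (env3 x y x) (Var 0) = eval A (env3 x y x) (tern (j i) (Var 0) (Var 1) (Var 0))"
      proof -
        have h: "holds_in TYPE(('f, nat) trm) ar \<Sigma> (Var 0) (tern (j i) (Var 0) (Var 1) (Var 0))" using g1 i by auto
        show ?thesis using su[OF h _ wf_tern[OF tj'[OF i]] env3_carrier[OF C(1) C(2) C(1)]] by simp
      qed
      then show "J i x y x = x" unfolding J_def tern_eval[OF tj'[OF i]] by (simp add: env3_def)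
    next
      fix x z assume C: "x \<in> carrier A" "z \<in> carrier A"
      have "eval A (env3 x z z) (Var 0) = eval A (env3 x z z) (tern pp (Var 0) (Var 2) (Var 2))"
        using su[OF g2 _ wf_tern[OF tp] env3_carrier[OF C(1) C(2) C(2)]] by auto
      then show "P x z z = x" unfolding P_def tern_eval[OF tp] by (simp add: env3_def)
    next
      fix x z assume C: "x \<in> carrier A" "z \<in> carrier A"
      have t1: "ternary_term ar (j 1)" using tj' by simp
      have "eval A (env3 x x z) (tern pp (Var 0) (Var 0) (Var 2)) = eval A (env3 x x z) (tern (j 1) (Var 0) (Var 0) (Var 2))"
        using su[OF g3 wf_tern[OF tp] wf_tern[OF t1] env3_carrier[OF C(1) C(1) C(2)]] .
      then show "P x x z = J 1 x x z" unfolding P_def J_def tern_eval[OF tp] tern_eval[OF t1]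
        by (simp add: env3_def)
    next
      fix i x z assume i: "1 \<le> i" "i \<le> n" "odd i" and C: "x \<in> carrier A" "z \<in> carrier A"
      have t1: "ternary_term ar (j i)" "ternary_term ar (j (i+1))" using tj' i by auto
      have "eval A (env3 x z z) (tern (j i) (Var 0) (Var 2) (Var 2)) = eval A (env3 x z z) (tern (j (i+1)) (Var 0) (Var 2) (Var 2))"
        using su[OF _ wf_tern[OF t1(1)] wf_tern[OF t1(2)] env3_carrier[OF C(1) C(2) C(2)]] g4 i by blast
      then show "J i x z z = J (Suc i) x z z" unfolding J_def tern_eval[OF t1(1)] tern_eval[OF t1(2)]
        by (simp add: env3_def)
    next
      fix i x z assume i: "1 \<le> i" "i \<le> n" "even i" and C: "x \<in> carrier A" "z \<in> carrier A"
      have t1: "ternary_term ar (j i)" "ternary_term ar (j (i+1))" using tj' i by auto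
      have "eval A (env3 x x z) (tern (j i) (Var 0) (Var 0) (Var 2)) = eval A (env3 x x z) (tern (j (i+1)) (Var 0) (Var 0) (Var 2))"
        using su[OF _ wf_tern[OF t1(1)] wf_tern[OF t1(2)] env3_carrier[OF C(1) C(1) C(2)]] g5 i by blast
      then show "J i x x z = J (Suc i) x x z" unfolding J_def tern_eval[OF t1(1)] tern_eval[OF t1(2)]
        by (simp add: env3_def)
    next
      fix x y z assume C: "x \<in> carrier A" "y \<in> carrier A" "z \<in> carrier A"
      have t1: "ternary_term ar (j (n+1))" using tj' by simp
      have "eval A (env3 x y z) (tern (j (n+1)) (Var 0) (Var 1) (Var 2)) = eval A (env3 x y z) (Var 2)"
        using su[OF g6 wf_tern[OF t1] _ env3_carrier[OF C]] by simp
      then show "J (n+1) x y z = z" unfolding J_def tern_eval[OF t1] by (simp add: env3_def)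
    qed
    have dm: "alg_mk_modular ar (2^(q+1) - 1) (2*r^q) A"
      by (rule iter_day[where ar=ar and r=r and A=A and k=q, OF dstep assms(1)])
    have rq: "r^q \<ge> 1" using assms(1) by simp
    have gm: "alg_mk_modular ar (2^((p-1)+q+1) - 1) (Wf (2*r^q) q n (p-1)) A"
      using iter_gumm[of ar A n q "2*r^q" "p-1", OF gstep dm] rq by simp
    obtain p' where p': "p = Suc p'" using assms(2) by (cases p) auto
    have e1: "(2::nat)^((p-1)+q+1) - 1 = 2^p * 2^q - 1" using p' by (simp add: power_add)
    have "int (Wf (2*r^q) q n (p-1)) = 2 * int r ^ q + (2 ^ q * 2 ^ (p + 1) - 2 ^ (q + 2) - 2 * int p + 2) * int n"
      unfolding Wf_int using p' by (simp add: algebra_simps power_add)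
    then have e2: "nat (2 * int r ^ q + (2 ^ q * 2 ^ (p + 1) - 2 ^ (q + 2) - 2 * int p + 2) * int n) = Wf (2*r^q) q n (p-1)"
      by (metis nat_int)
    show "alg_mk_modular ar (2 ^ p * 2 ^ q - 1)
           (nat (2 * int r ^ q + (2 ^ q * 2 ^ (p + 1) - 2 ^ (q + 2) - 2 * int p + 2) * int n)) A"
      using gm unfolding e1 e2 .
  qed
qed


end
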